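(* Let $\Omega\subset\mathbb R^d$ be a bounded Borel set, $f:\Omega\to[0,\infty)$ with $\int_\Omega f=1$, $p\ge1$, $x_1,x_2\in\Omega$, and $h_1,h_2:[0,1]\to[0,\infty)$ continuous and non-decreasing, and assume $|G(s)-G(t)|<|s-t|$ for all $s\neq t$ in $\mathbb R$. Let $\psi_0:\Omega\to\{0,1\}$ be any Borel function and define recursively, for $j\ge0$, $m_j=\int_\Omega(1-\psi_j)f\,dx$, $t_{j+1}=h_2(1-m_j)-h_1(m_j)$, and $\psi_{j+1}(x)=0$ if $\tau(x)<t_{j+1}$, $\psi_{j+1}(x)=1$ otherwise. Then $t_j\to\bar t$ as $j\to\infty$, and $\psi_j\to\bar\psi$ uniformly on every compact subset of $\Omega\setminus\{\tau=\bar t\}$.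
   Context: $\tau(x)=|x-x_1|^p-|x-x_2|^p$, $m(t)=\int_{\{x\in\Omega:\tau(x)<t\}}f\,dx$, $G(t)=h_2(1-m(t))-h_1(m(t))$. Under the hypotheses there is a unique $\bar t\in\mathbb R$ with $G(\bar t)=\bar t$; the (unique) equilibrium is $A_1=\{\tau<\bar t\}$, $A_2=\{\tau>\bar t\}$, and $\bar\psi(x)=0$ if $\tau(x)<\bar t$, $\bar\psi(x)=1$ if $\tau(x)>\bar t$. *)

theory Defs
  imports "HOL-Analysis.Analysis"
begin

definition tau :: "real \<Rightarrow> 'a::euclidean_space \<Rightarrow> 'a \<Rightarrow> 'a \<Rightarrow> real" where
  "tau p x1 x2 x = norm (x - x1) powr p - norm (x - x2) powr p"

definition mfun :: "'a::euclidean_space set \<Rightarrow> ('a \<Rightarrow> real) \<Rightarrow> real \<Rightarrow> 'a \<Rightarrow> 'a \<Rightarrow> real \<Rightarrow> real" where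
  "mfun \<Omega> f p x1 x2 t = (LINT x:{x\<in>\<Omega>. tau p x1 x2 x < t}|lborel. f x)"

definition Gfun :: "(real \<Rightarrow> real) \<Rightarrow> (real \<Rightarrow> real) \<Rightarrow> 'a::euclidean_space set \<Rightarrow> ('a \<Rightarrow> real)
    \<Rightarrow> real \<Rightarrow> 'a \<Rightarrow> 'a \<Rightarrow> real \<Rightarrow> real" where
  "Gfun h1 h2 \<Omega> f p x1 x2 t = h2 (1 - mfun \<Omega> f p x1 x2 t) - h1 (mfun \<Omega> f p x1 x2 t)"

end

theory Submission
  imports Defs
begin

lemma tau_cont: "p > 0 \<Longrightarrow> continuous_on S (tau p x1 x2)"
  unfolding tau_def[abs_def]
  by (intro continuous_intros continuous_on_powr') auto

theorem proposition5p1: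
  fixes \<Omega> :: "'a::euclidean_space set" and f :: "'a \<Rightarrow> real" and p :: real
    and x1 x2 :: 'a and h1 h2 :: "real \<Rightarrow> real"
    and psi :: "nat \<Rightarrow> 'a \<Rightarrow> real" and t :: "nat \<Rightarrow> real"
  assumes \<Omega>_borel: "\<Omega> \<in> sets borel" and \<Omega>_bdd: "bounded \<Omega>"
    and f_nonneg: "\<And>x. x \<in> \<Omega> \<Longrightarrow> f x \<ge> 0"
    and f_int: "set_integrable lborel \<Omega> f"
    and f_one: "(LINT x:\<Omega>|lborel. f x) = 1"
    and p: "p \<ge> 1"
    and x1: "x1 \<in> \<Omega>" and x2: "x2 \<in> \<Omega>"
    and h1_cont: "continuous_on {0..1} h1" and h1_mono: "mono_on {0..1} h1"
    and h1_nonneg: "\<And>s. s \<in> {0..1} \<Longrightarrow> h1 s \<ge> 0"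
    and h2_cont: "continuous_on {0..1} h2" and h2_mono: "mono_on {0..1} h2"
    and h2_nonneg: "\<And>s. s \<in> {0..1} \<Longrightarrow> h2 s \<ge> 0"
    and G_contr: "\<And>s r. s \<noteq> r \<Longrightarrow>
        \<bar>Gfun h1 h2 \<Omega> f p x1 x2 s - Gfun h1 h2 \<Omega> f p x1 x2 r\<bar> < \<bar>s - r\<bar>"
    and psi0_meas: "set_borel_measurable borel \<Omega> (psi 0)"
    and psi0_vals: "\<And>x. x \<in> \<Omega> \<Longrightarrow> psi 0 x \<in> {0, 1}"
    and t_rec: "\<And>j. t (Suc j) =
        h2 (1 - (LINT x:\<Omega>|lborel. (1 - psi j x) * f x))
        - h1 (LINT x:\<Omega>|lborel. (1 - psi j x) * f x)"
    and psi_rec: "\<And>j x. x \<in> \<Omega> \<Longrightarrow>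
        psi (Suc j) x = (if tau p x1 x2 x < t (Suc j) then 0 else 1)"
  shows "\<exists>tbar. Gfun h1 h2 \<Omega> f p x1 x2 tbar = tbar \<and> t \<longlonglongrightarrow> tbar \<and>
    (\<forall>K. compact K \<longrightarrow> K \<subseteq> \<Omega> - {x. tau p x1 x2 x = tbar} \<longrightarrow>
       uniform_limit K psi (\<lambda>x. if tau p x1 x2 x < tbar then 0 else 1) sequentially)"
proof -
  define G where "G = Gfun h1 h2 \<Omega> f p x1 x2"
  define \<tau> where "\<tau> = tau p x1 x2"
  have Glip: "\<bar>G s - G r\<bar> \<le> \<bar>s - r\<bar>" for s r
    using G_contr[of s r] unfolding G_def by (cases "s = r") auto
  have Gcont: "continuous_on S G" for S
    unfolding continuous_on_iff dist_real_def
    by (metis Glip le_less_trans)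
  have taucont: "continuous_on S \<tau>" for S
    unfolding \<tau>_def using tau_cont[of p S x1 x2] p by simp
  obtain B where B: "\<And>x. x \<in> \<Omega> \<Longrightarrow> norm x \<le> B"
    using \<Omega>_bdd bounded_iff by blast
  define T where "T = 2 * (2 * max B 0) powr p + 1"
  have Tpos: "T > 0" unfolding T_def using powr_ge_zero[of "2 * max B 0" p] by linarith
  have tauT: "\<bar>\<tau> x\<bar> < T" if "x \<in> \<Omega>" for x
  proof -
    have n1: "norm (x - x1) \<le> 2 * max B 0"
      using B[OF that] B[OF x1] norm_triangle_ineq4[of x x1] by linarith
    have n2: "norm (x - x2) \<le> 2 * max B 0"
      using B[OF that] B[OF x2] norm_triangle_ineq4[of x x2] by linarith
    have a: "norm (x - x1) powr p \<le> (2 * max B 0) powr p"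
      using n1 p by (intro powr_mono2) auto
    have b: "norm (x - x2) powr p \<le> (2 * max B 0) powr p"
      using n2 p by (intro powr_mono2) auto
    have "norm (x - x1) powr p \<ge> 0" "norm (x - x2) powr p \<ge> 0" by auto
    then show ?thesis using a b unfolding \<tau>_def tau_def T_def by linarith
  qed
  have Gred: "\<exists>s\<in>{-T..T}. G r = G s" for r
  proof (cases "r \<ge> T")
    case True
    have "{x\<in>\<Omega>. \<tau> x < r} = {x\<in>\<Omega>. \<tau> x < T}" using tauT True by fastforce
    then have "G r = G T" unfolding G_def Gfun_def mfun_def \<tau>_def by simp
    then show ?thesis using Tpos by auto
  next
    case False
    show ?thesis
    proof (cases "r \<le> -T")
      case True
      have "{x\<in>\<Omega>. \<tau> x < r} = {x\<in>\<Omega>. \<tau> x < -T}" using tauT True by fastforce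
      then have "G r = G (-T)" unfolding G_def Gfun_def mfun_def \<tau>_def by simp
      then show ?thesis using Tpos by auto
    next
      case False
      then show ?thesis using \<open>\<not> r \<ge> T\<close> by auto
    qed
  qed
  have "bounded (G ` {-T..T})"
    by (intro compact_imp_bounded compact_continuous_image Gcont) auto
  then obtain M where M0: "\<And>s. s \<in> {-T..T} \<Longrightarrow> \<bar>G s\<bar> \<le> M"
    unfolding bounded_iff by fastforce
  have M: "\<bar>G s\<bar> \<le> M" for s using Gred[of s] M0 by auto
  have "\<exists>x. -M-1 \<le> x \<and> x \<le> M+1 \<and> (\<lambda>x. x - G x) x = 0"
  proof (rule IVT')
    show "(\<lambda>x. x - G x) (-M-1) \<le> 0" using M[of "-M-1"] by simp
    show "0 \<le> (\<lambda>x. x - G x) (M+1)" using M[of "M+1"] by simp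
    show "-M-1 \<le> M+1" using M[of 0] by simp
    show "continuous_on {-M-1..M+1} (\<lambda>x. x - G x)"
      by (intro continuous_intros Gcont)
  qed
  then obtain tbar where Gfix: "G tbar = tbar" by (metis eq_iff_diff_eq_0)
  have recur: "t (Suc (Suc j)) = G (t (Suc j))" for j
  proof -
    have "(LINT x:\<Omega>|lborel. (1 - psi (Suc j) x) * f x)
        = (LINT x:{x\<in>\<Omega>. \<tau> x < t (Suc j)}|lborel. f x)"
      unfolding set_lebesgue_integral_def
      by (rule arg_cong[where f="integral\<^sup>L lborel"], rule ext)
         (auto simp: indicator_def psi_rec \<tau>_def)
    then show ?thesis
      using t_rec[of "Suc j"] unfolding G_def Gfun_def mfun_def \<tau>_def by simp
  qed
  define u where "u n = t (Suc n)" for n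
  have urec: "u (Suc n) = G (u n)" for n unfolding u_def using recur by simp
  define d where "d n = \<bar>u n - tbar\<bar>" for n
  have "decseq d"
    unfolding decseq_Suc_iff d_def urec
    using Glip Gfix by metis
  then obtain L where dL: "d \<longlonglongrightarrow> L"
    using decseq_convergent[of d 0] unfolding d_def by auto
  define w where "w n = u (Suc n)" for n
  have "seq_compact {-M..M}" by (intro compact_imp_seq_compact) auto
  moreover have "\<forall>n. w n \<in> {-M..M}" unfolding w_def urec using M abs_le_iff by (auto simp: minus_le_iff)
  ultimately obtain v r where r: "strict_mono r" and wv: "(w \<circ> r) \<longlonglongrightarrow> v"
    using seq_compactE by metis
  have sm1: "strict_mono (\<lambda>n. Suc (r n))" and sm2: "strict_mono (\<lambda>n. Suc (Suc (r n)))"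
    using r by (auto simp: strict_mono_def)
  have "(d \<circ> (\<lambda>n. Suc (r n))) \<longlonglongrightarrow> L" using LIMSEQ_subseq_LIMSEQ[OF dL sm1] .
  moreover have "(d \<circ> (\<lambda>n. Suc (r n))) \<longlonglongrightarrow> \<bar>v - tbar\<bar>"
    unfolding d_def o_def using wv unfolding w_def o_def
    by (intro tendsto_intros)
  ultimately have L1: "L = \<bar>v - tbar\<bar>" using LIMSEQ_unique by blast
  have "(d \<circ> (\<lambda>n. Suc (Suc (r n)))) \<longlonglongrightarrow> L" using LIMSEQ_subseq_LIMSEQ[OF dL sm2] .
  moreover have "(d \<circ> (\<lambda>n. Suc (Suc (r n)))) \<longlonglongrightarrow> \<bar>G v - tbar\<bar>"
  proof -
    have "((\<lambda>n. G (w (r n)))) \<longlonglongrightarrow> G v"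
      using continuous_on_tendsto_compose[OF Gcont[of UNIV] wv[unfolded o_def]] by simp
    then show ?thesis
      unfolding d_def o_def urec[symmetric] w_def by (intro tendsto_intros)
  qed
  ultimately have L2: "L = \<bar>G v - tbar\<bar>" using LIMSEQ_unique by blast
  have "v = tbar"
  proof (rule ccontr)
    assume "v \<noteq> tbar"
    then have "\<bar>G v - G tbar\<bar> < \<bar>v - tbar\<bar>" using G_contr unfolding G_def by blast
    then show False using L1 L2 Gfix by simp
  qed
  then have "L = 0" using L1 by simp
  then have "(\<lambda>n. u n - tbar) \<longlonglongrightarrow> 0"
    using dL unfolding d_def by (simp add: tendsto_rabs_zero_iff)
  then have "u \<longlonglongrightarrow> tbar" using LIM_zero_cancel by blast
  then have tlim: "t \<longlonglongrightarrow> tbar" unfolding u_def by (rule LIMSEQ_imp_Suc)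
  have unif: "uniform_limit K psi (\<lambda>x. if \<tau> x < tbar then 0 else 1) sequentially"
    if K: "compact K" "K \<subseteq> \<Omega> - {x. \<tau> x = tbar}" for K
  proof (cases "K = {}")
    case True
    then show ?thesis by (simp add: uniform_limit_iff)
  next
    case False
    have "continuous_on K (\<lambda>x. \<bar>\<tau> x - tbar\<bar>)" by (intro continuous_intros taucont)
    then obtain x0 where x0: "x0 \<in> K" "\<And>y. y \<in> K \<Longrightarrow> \<bar>\<tau> x0 - tbar\<bar> \<le> \<bar>\<tau> y - tbar\<bar>"
      using continuous_attains_inf[OF K(1) False] by blast
    define \<delta> where "\<delta> = \<bar>\<tau> x0 - tbar\<bar>"
    have \<delta>: "\<delta> > 0" using x0 K unfolding \<delta>_def by auto
    have ev: "\<forall>\<^sub>F n in sequentially. \<bar>t n - tbar\<bar> < \<delta>"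
      using tlim \<delta> unfolding tendsto_iff dist_real_def by blast
    show ?thesis
      unfolding uniform_limit_iff
    proof (intro allI impI)
      fix e :: real assume e: "e > 0"
      have "\<forall>\<^sub>F n in sequentially. n \<ge> 1" by (simp add: eventually_ge_at_top)
      then show "\<forall>\<^sub>F n in sequentially. \<forall>x\<in>K. dist (psi n x) (if \<tau> x < tbar then 0 else 1) < e"
      proof (rule eventually_elim2[OF ev])
        fix n :: nat assume n: "\<bar>t n - tbar\<bar> < \<delta>" "n \<ge> 1"
        then obtain j where j: "n = Suc j" by (cases n) auto
        show "\<forall>x\<in>K. dist (psi n x) (if \<tau> x < tbar then 0 else 1) < e"
        proof
          fix x assume x: "x \<in> K"
          have xO: "x \<in> \<Omega>" using x K by auto
          have "\<delta> \<le> \<bar>\<tau> x - tbar\<bar>" using x0(2)[OF x] unfolding \<delta>_def .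
          then have "(\<tau> x < t n) = (\<tau> x < tbar)" using n by auto
          then have "psi n x = (if \<tau> x < tbar then 0 else 1)"
            using psi_rec[OF xO, of j] j unfolding \<tau>_def by simp
          then show "dist (psi n x) (if \<tau> x < tbar then 0 else 1) < e" using e by simp
        qed
      qed
    qed
  qed
  show ?thesis
    using Gfix tlim unif unfolding G_def \<tau>_def by blast
qed

end
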